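(* Let $n\ge m>1$ be integers. Then $$\max\Big\{\sum_{i,j=1}^n t_it_j\,|U^\top U|_{ij}:\ t\in\mathbb{R}^n,\ \|t\|_2=1,\ U\in\mathbb{R}^{m\times n},\ UU^\top=\mathrm{I}_m\Big\}\ \le\ \frac{m}{n}\left(1+\sqrt{\frac{(n-1)(n-m)}{m}}\right),$$ with equality if and only if there exists $U\in\mathbb{R}^{m\times n}$ with $UU^\top=\mathrm{I}_m$, $(U^\top U)_{ii}=m/n$ for all $i\in\{1,\dots,n\}$, and $|U^\top U|_{ij}=\frac1n\sqrt{\frac{(n-m)m}{n-1}}$ for all $i\ne j$.
   Context: $|A|_{ij}$ denotes the absolute value of the $(i,j)$ entry of a matrix $A$. *)

theory Defs
  imports Complex_Main
begin

text \<open>Matrices of varying size are represented as functions nat => nat => real;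
  an m x n matrix U uses the entries U i j with i < m, j < n.\<close>

definition orth_rows :: "nat \<Rightarrow> nat \<Rightarrow> (nat \<Rightarrow> nat \<Rightarrow> real) \<Rightarrow> bool" where
  "orth_rows m n U \<longleftrightarrow>
     (\<forall>i<m. \<forall>k<m. (\<Sum>j<n. U i j * U k j) = (if i = k then 1 else 0))"

definition gram :: "nat \<Rightarrow> (nat \<Rightarrow> nat \<Rightarrow> real) \<Rightarrow> nat \<Rightarrow> nat \<Rightarrow> real" where
  "gram m U i j = (\<Sum>k<m. U k i * U k j)"

definition objective_set :: "nat \<Rightarrow> nat \<Rightarrow> real set" where
  "objective_set m n =
     {(\<Sum>i<n. \<Sum>j<n. t i * t j * \<bar>gram m U i j\<bar>) | t U.
        (\<Sum>i<n. (t i)\<^sup>2) = 1 \<and> orth_rows m n U}"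

end

theory Submission
  imports Defs
begin


lemma gram_sym: "gram m U i j = gram m U j i"
  unfolding gram_def by (simp add: mult.commute)

lemma gram_diag_nonneg: "gram m U i i \<ge> 0"
  unfolding gram_def by (simp add: sum_nonneg)

lemma gram_trace:
  assumes "orth_rows m n U"
  shows "(\<Sum>i<n. gram m U i i) = real m"
proof -
  have "(\<Sum>i<n. gram m U i i) = (\<Sum>k<m. \<Sum>i<n. U k i * U k i)"
    unfolding gram_def by (rule sum.swap)
  also have "\<dots> = (\<Sum>k<m. 1)"
    using assms unfolding orth_rows_def by (intro sum.cong) auto
  finally show ?thesis by simp
qed

lemma gram_sq:
  assumes "orth_rows m n U"
  shows "(\<Sum>j<n. (gram m U i j)\<^sup>2) = gram m U i i"
proof -
  have "(\<Sum>j<n. (gram m U i j)\<^sup>2) = (\<Sum>j<n. \<Sum>k<m. \<Sum>l<m. U k i * U l i * (U k j * U l j))"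
    unfolding gram_def power2_eq_square sum_product by (simp add: mult_ac)
  also have "\<dots> = (\<Sum>k<m. \<Sum>l<m. \<Sum>j<n. U k i * U l i * (U k j * U l j))"
    by (subst sum.swap) (simp add: sum.swap[of _ "{..<n}"])
  also have "\<dots> = (\<Sum>k<m. \<Sum>l<m. U k i * U l i * (if k = l then 1 else 0))"
    using assms unfolding orth_rows_def
    by (intro sum.cong refl) (simp add: sum_distrib_left[symmetric])
  also have "\<dots> = (\<Sum>k<m. U k i * U k i)"
    by (simp add: if_distrib cong: if_cong)
  finally show ?thesis unfolding gram_def .
qed

lemma finite_subseq:
  fixes f :: "nat \<Rightarrow> 'a \<Rightarrow> real"
  assumes "finite I" and "\<And>k i. i \<in> I \<Longrightarrow> \<bar>f k i\<bar> \<le> B"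
  shows "\<exists>r. strict_mono r \<and> (\<forall>i\<in>I. convergent (\<lambda>k. f (r k) i))"
  using assms
proof (induction I rule: finite_induct)
  case empty
  show ?case by (rule exI[of _ id]) (simp add: strict_mono_def)
next
  case (insert x I)
  then obtain r where r: "strict_mono r" "\<forall>i\<in>I. convergent (\<lambda>k. f (r k) i)" by auto
  obtain s where s: "strict_mono s" "monoseq (\<lambda>k. f (r (s k)) x)"
    using seq_monosub[of "\<lambda>k. f (r k) x"] by auto
  have "Bseq (\<lambda>k. f (r (s k)) x)"
    using insert.prems by (intro BseqI'[of _ B]) auto
  then have cx: "convergent (\<lambda>k. f (r (s k)) x)"
    using s(2) Bseq_monoseq_convergent by blast
  have "\<forall>i\<in>I. convergent (\<lambda>k. f (r (s k)) i)"
    using r(2) convergent_subseq_convergent[OF _ s(1)] by (auto simp: o_def)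
  with cx show ?case
    using strict_mono_o[OF r(1) s(1)] by (intro exI[of _ "r \<circ> s"]) (auto simp: o_def)
qed



definition val :: "nat \<Rightarrow> nat \<Rightarrow> (nat \<Rightarrow> real) \<Rightarrow> (nat \<Rightarrow> nat \<Rightarrow> real) \<Rightarrow> real" where
  "val m n t U = (\<Sum>i<n. \<Sum>j<n. t i * t j * \<bar>gram m U i j\<bar>)"

lemma key_identity:
  fixes t :: "nat \<Rightarrow> real" and c :: real
  assumes orth: "orth_rows m n U" and t1: "(\<Sum>i<n. (t i)\<^sup>2) = 1" and c: "c > 0" and n: "n > 0"
  defines "Q \<equiv> \<lambda>i j. \<bar>gram m U i j\<bar>" and "d \<equiv> \<lambda>i. gram m U i i"
  defines "e \<equiv> \<lambda>i. d i - c * (t i)\<^sup>2" and "\<mu> \<equiv> (real m - c) / real n"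
  shows "val m n t U = c/2 + m/(2*c) - (m - c)\<^sup>2/(2*c*n)
     - (\<Sum>i<n. \<Sum>j<n. if i = j then 0 else (c * t i * t j - Q i j)\<^sup>2/(2*c))
     - (\<Sum>i<n. (e i - \<mu>)\<^sup>2)/(2*c)"
proof -
  define s where "s = (\<lambda>i j. if i = j then 0 else (c * t i * t j - Q i j)\<^sup>2/(2*c))"
  have Qd: "Q i i = d i" for i unfolding Q_def d_def using gram_diag_nonneg by simp
  have pt: "t i * t j * Q i j = c/2*(t i)\<^sup>2*(t j)\<^sup>2 + (Q i j)\<^sup>2/(2*c)
      + (if i = j then -(e i)\<^sup>2/(2*c) else 0) - s i j" for i j
  proof (cases "i = j")
    case True
    then show ?thesis unfolding s_def e_def using c Qd[of i]
      by (simp add: field_simps power2_eq_square)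
  next
    case False
    then show ?thesis unfolding s_def using c
      by (simp add: field_simps power2_eq_square)
  qed
  have QQ: "(\<Sum>i<n. \<Sum>j<n. (Q i j)\<^sup>2) = real m"
    unfolding Q_def using gram_sq[OF orth] gram_trace[OF orth] by simp
  have sumx: "(\<Sum>i<n. \<Sum>j<n. c/2*(t i)\<^sup>2*(t j)\<^sup>2) = c/2"
  proof -
    have "(\<Sum>i<n. \<Sum>j<n. c/2*(t i)\<^sup>2*(t j)\<^sup>2) = c/2 * ((\<Sum>i<n. (t i)\<^sup>2) * (\<Sum>j<n. (t j)\<^sup>2))"
      by (simp add: sum_product sum_distrib_left mult_ac)
    then show ?thesis using t1 by simp
  qed
  have sumdelta: "(\<Sum>i<n. \<Sum>j<n. (if i = j then -(e i)\<^sup>2/(2*c) else 0)) = - (\<Sum>i<n. (e i)\<^sup>2)/(2*c)"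
    by (simp add: sum_negf sum_divide_distrib)
  have "val m n t U = (\<Sum>i<n. \<Sum>j<n. c/2*(t i)\<^sup>2*(t j)\<^sup>2 + (Q i j)\<^sup>2/(2*c)
      + (if i = j then -(e i)\<^sup>2/(2*c) else 0) - s i j)"
  proof -
    have "val m n t U = (\<Sum>i<n. \<Sum>j<n. t i * t j * Q i j)" by (simp add: val_def Q_def)
    then show ?thesis using pt by simp
  qed
  also have "\<dots> = c/2 + m/(2*c) - (\<Sum>i<n. (e i)\<^sup>2)/(2*c) - (\<Sum>i<n. \<Sum>j<n. s i j)"
    using sumx QQ sumdelta
    by (simp add: sum.distrib sum_subtractf sum_divide_distrib[symmetric])
  finally have v: "val m n t U = c/2 + m/(2*c) - (\<Sum>i<n. (e i)\<^sup>2)/(2*c) - (\<Sum>i<n. \<Sum>j<n. s i j)" .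
  have se: "(\<Sum>i<n. e i) = real m - c"
    unfolding e_def d_def using gram_trace[OF orth] t1
    by (simp add: sum_subtractf sum_distrib_left[symmetric])
  have "(\<Sum>i<n. (e i - \<mu>)\<^sup>2) = (\<Sum>i<n. (e i)\<^sup>2) - 2*\<mu>*(\<Sum>i<n. e i) + real n * \<mu>\<^sup>2"
    by (simp add: power2_diff sum.distrib sum_subtractf sum_distrib_left mult_ac)
  also have "\<dots> = (\<Sum>i<n. (e i)\<^sup>2) - (m - c)\<^sup>2 / n"
    unfolding se \<mu>_def using n by (simp add: field_simps power2_eq_square)
  finally have E: "(\<Sum>i<n. (e i)\<^sup>2) = (\<Sum>i<n. (e i - \<mu>)\<^sup>2) + (m - c)\<^sup>2 / n" by simp
  show ?thesis unfolding v s_def E using c n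
    by (simp add: add_divide_distrib divide_divide_eq_left mult_ac)
qed



lemma val_le_R:
  fixes t :: "nat \<Rightarrow> real" and c :: real
  assumes orth: "orth_rows m n U" and t1: "(\<Sum>i<n. (t i)\<^sup>2) = 1" and c: "c > 0" and n: "n > 0"
  shows "val m n t U \<le> c/2 + m/(2*c) - (m - c)\<^sup>2/(2*c*n)"
proof -
  have "0 \<le> (\<Sum>i<n. \<Sum>j<n. if i = j then 0 else (c * t i * t j - \<bar>gram m U i j\<bar>)\<^sup>2/(2*c))"
    using c by (intro sum_nonneg) auto
  moreover have "0 \<le> (\<Sum>i<n. ((gram m U i i - c * (t i)\<^sup>2) - (real m - c) / real n)\<^sup>2)/(2*c)"
    using c by (intro divide_nonneg_pos sum_nonneg) auto
  ultimately show ?thesis using key_identity[OF assms] by linarith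
qed

lemma beta_eq:
  assumes "1 < m" "m < n"
  defines "c \<equiv> sqrt ((real n - real m) * real m / (real n - 1))"
  shows "c > 0" "c\<^sup>2 = (real n - real m) * real m / (real n - 1)"
    "c/2 + m/(2*c) - (m - c)\<^sup>2/(2*c*n) = real m / real n * (1 + sqrt ((real n - 1) * (real n - real m) / real m))"
proof -
  have nm: "real n - real m > 0" "real n - 1 > 0" "real m > 0" using assms(1,2) by auto
  then show cpos: "c > 0" unfolding c_def by simp
  show c2: "c\<^sup>2 = (real n - real m) * real m / (real n - 1)"
    unfolding c_def using nm by simp
  have s: "sqrt ((real n - 1) * (real n - real m) / real m) = c * (real n - 1) / real m"
  proof (rule real_sqrt_unique)
    show "(c * (real n - 1) / real m)\<^sup>2 = (real n - 1) * (real n - real m) / real m"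
      unfolding power_divide power_mult_distrib c2 using nm by (simp add: field_simps power2_eq_square)
    show "0 \<le> c * (real n - 1) / real m" using cpos nm by simp
  qed
  have key: "c\<^sup>2 * (real n - 1) = real n * real m - (real m)\<^sup>2"
    using c2 nm by (simp add: field_simps power2_eq_square)
  show "c/2 + m/(2*c) - (m - c)\<^sup>2/(2*c*n) = real m / real n * (1 + sqrt ((real n - 1) * (real n - real m) / real m))"
    unfolding s using cpos nm key
    by (simp add: field_simps power2_eq_square) algebra
qed

lemma val_bound:
  assumes "1 < m" "m \<le> n" and orth: "orth_rows m n U" and t1: "(\<Sum>i<n. (t i)\<^sup>2) = 1"
  shows "val m n t U \<le> real m / real n * (1 + sqrt ((real n - 1) * (real n - real m) / real m))"
proof (cases "m < n")
  case True
  define c where "c = sqrt ((real n - real m) * real m / (real n - 1))"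
  have n: "n > 0" using assms by auto
  show ?thesis using val_le_R[OF orth t1 beta_eq(1)[OF assms(1) True] n] beta_eq(3)[OF assms(1) True]
    by simp
next
  case False
  then have mn: "m = n" using assms by auto
  have n: "n > 1" using assms by auto
  show ?thesis
  proof (rule ccontr)
    assume "\<not> ?thesis"
    then have v: "val m n t U > 1" using mn n by simp
    define c where "c = (val m n t U - 1) * real n / (real n - 1)"
    have cpos: "c > 0" unfolding c_def using v n by simp
    have "val m n t U \<le> c/2 + m/(2*c) - (m - c)\<^sup>2/(2*c*n)"
      using val_le_R[OF orth t1 cpos] n by simp
    also have "\<dots> = 1 + c * (real n - 1) / (2 * real n)"
      using cpos n mn by (simp add: field_simps power2_eq_square)
    also have "\<dots> = 1 + (val m n t U - 1) / 2"
      unfolding c_def using n by (simp add: field_simps)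
    finally have "val m n t U \<le> 1 + (val m n t U - 1) / 2" .
    then show False using v by (simp add: field_simps)
  qed
qed



lemma equality_case:
  assumes m1: "1 < m" and mn: "m < n" and orth: "orth_rows m n U" and t1: "(\<Sum>i<n. (t i)\<^sup>2) = 1"
    and eq: "val m n t U = real m / real n * (1 + sqrt ((real n - 1) * (real n - real m) / real m))"
  shows "(\<forall>i<n. gram m U i i = real m / real n)
       \<and> (\<forall>i<n. \<forall>j<n. i \<noteq> j \<longrightarrow>
            \<bar>gram m U i j\<bar> = 1 / real n * sqrt ((real n - real m) * real m / (real n - 1)))"
proof -
  define c where "c = sqrt ((real n - real m) * real m / (real n - 1))"
  have cpos: "c > 0" and c2: "c\<^sup>2 = (real n - real m) * real m / (real n - 1)"
    and R: "c/2 + m/(2*c) - (m - c)\<^sup>2/(2*c*n) = real m / real n * (1 + sqrt ((real n - 1) * (real n - real m) / real m))"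
    using beta_eq[OF m1 mn] unfolding c_def by auto
  have n: "n > 0" using mn by auto
  have nr: "real n - real m > 0" "real n - 1 > 0" "real m > 1" using m1 mn by auto
  define Q where "Q = (\<lambda>i j. \<bar>gram m U i j\<bar>)"
  define d where "d = (\<lambda>i. gram m U i i)"
  define e where "e = (\<lambda>i. d i - c * (t i)\<^sup>2)"
  define \<mu> where "\<mu> = (real m - c) / real n"
  define S1 where "S1 = (\<Sum>i<n. \<Sum>j<n. if i = j then 0 else (c * t i * t j - Q i j)\<^sup>2/(2*c))"
  define S2 where "S2 = (\<Sum>i<n. (e i - \<mu>)\<^sup>2)"
  have id: "val m n t U = c/2 + m/(2*c) - (m - c)\<^sup>2/(2*c*n) - S1 - S2/(2*c)"
    using key_identity[OF orth t1 cpos n] unfolding S1_def S2_def Q_def e_def d_def \<mu>_def by simp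
  have S1nn: "S1 \<ge> 0" unfolding S1_def using cpos by (intro sum_nonneg) auto
  have S2nn: "S2 \<ge> 0" unfolding S2_def by (intro sum_nonneg) auto
  have S1z: "S1 = 0" and S2z: "S2 = 0"
  proof -
    have "S1 + S2/(2*c) = 0" using id eq R by linarith
    moreover have "S2/(2*c) \<ge> 0" using S2nn cpos by simp
    ultimately have "S1 = 0" "S2/(2*c) = 0" using S1nn by linarith+
    then show "S1 = 0" "S2 = 0" using cpos by auto
  qed
  have ei: "e i = \<mu>" if "i < n" for i
  proof -
    have "\<forall>i\<in>{..<n}. (e i - \<mu>)\<^sup>2 = 0"
      using S2z unfolding S2_def by (subst sum_nonneg_eq_0_iff[symmetric]) auto
    then show ?thesis using that by auto
  qed
  have Qij: "Q i j = c * t i * t j" if "i < n" "j < n" "i \<noteq> j" for i j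
  proof -
    have inner: "\<forall>i\<in>{..<n}. (\<Sum>j<n. if i = j then 0 else (c * t i * t j - Q i j)\<^sup>2/(2*c)) = 0"
      using S1z unfolding S1_def using cpos
      by (subst sum_nonneg_eq_0_iff[symmetric]) (auto intro!: sum_nonneg)
    then have "\<forall>j\<in>{..<n}. (if i = j then 0 else (c * t i * t j - Q i j)\<^sup>2/(2*c)) = 0"
      using that cpos by (subst sum_nonneg_eq_0_iff[symmetric]) auto
    then have "(if i = j then 0 else (c * t i * t j - Q i j)\<^sup>2/(2*c)) = 0" using that(2) by blast
    then have "(c * t i * t j - Q i j)\<^sup>2/(2*c) = 0" using that(3) by simp
    then show ?thesis using cpos by simp
  qed
  have xi: "(t i)\<^sup>2 = 1 / real n" if i: "i < n" for i
  proof -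
    define x where "x = (t i)\<^sup>2"
    have di: "d i = \<mu> + c * x" using ei[OF i] unfolding e_def x_def by simp
    have "(\<Sum>j<n. (Q i j)\<^sup>2) = d i"
      unfolding Q_def d_def using gram_sq[OF orth] by simp
    moreover have "(\<Sum>j<n. (Q i j)\<^sup>2) = (\<Sum>j<n. c\<^sup>2 * x * (t j)\<^sup>2) + ((d i)\<^sup>2 - c\<^sup>2 * x * x)"
    proof -
      have "(\<Sum>j<n. (Q i j)\<^sup>2) = (\<Sum>j<n. c\<^sup>2 * x * (t j)\<^sup>2 + (if j = i then (d i)\<^sup>2 - c\<^sup>2 * x * x else 0))"
      proof (rule sum.cong[OF refl])
        fix j assume j: "j \<in> {..<n}"
        show "(Q i j)\<^sup>2 = c\<^sup>2 * x * (t j)\<^sup>2 + (if j = i then (d i)\<^sup>2 - c\<^sup>2 * x * x else 0)"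
        proof (cases "j = i")
          case True
          then show ?thesis unfolding Q_def d_def x_def using gram_diag_nonneg[of m U i]
            by (simp add: power2_eq_square)
        next
          case False
          then show ?thesis using Qij[OF i _ ] j unfolding x_def
            by (simp add: power_mult_distrib)
        qed
      qed
      also have "\<dots> = (\<Sum>j<n. c\<^sup>2 * x * (t j)\<^sup>2) + ((d i)\<^sup>2 - c\<^sup>2 * x * x)"
        using i by (simp add: sum.distrib)
      finally show ?thesis .
    qed
    moreover have "(\<Sum>j<n. c\<^sup>2 * x * (t j)\<^sup>2) = c\<^sup>2 * x"
      using t1 by (simp add: sum_distrib_left[symmetric])
    ultimately have E: "(\<mu> + c * x)\<^sup>2 + c\<^sup>2 * x - c\<^sup>2 * x * x = \<mu> + c * x"
      unfolding di by simp
    define K where "K = c * (2 * \<mu> + c - 1)"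
    have E1: "x * K = \<mu> - \<mu>\<^sup>2" using E unfolding K_def by (simp add: algebra_simps power2_eq_square)
    have key: "c\<^sup>2 * (real n - 1) = real n * real m - (real m)\<^sup>2"
      using c2 nr by (simp add: field_simps power2_eq_square)
    have E2: "(1 / real n) * K = \<mu> - \<mu>\<^sup>2"
      unfolding K_def \<mu>_def using n key
      by (simp add: field_simps power2_eq_square) algebra
    have Knz: "K \<noteq> 0"
    proof
      assume "K = 0"
      then have "2 * \<mu> + c - 1 = 0" unfolding K_def using cpos by simp
      then have h: "c * (real n - 2) = real n - 2 * real m" unfolding \<mu>_def using n
        by (simp add: field_simps)
      then have "c\<^sup>2 * (real n - 2)\<^sup>2 = (real n - 2 * real m)\<^sup>2"
        by (metis power_mult_distrib)
      then have "(real n)\<^sup>2 * ((real m - 1) * (real m - (real n - 1))) = 0"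
        using key nr by (simp add: field_simps power2_eq_square) algebra
      then have "(real m - 1) * (real m - (real n - 1)) = 0" using n by simp
      then have "real m = real n - 1" using nr by simp
      then have "(c + 1) * (real n - 2) = 0" using h by (simp add: algebra_simps)
      then have "real n = 2" using cpos by simp
      then show False using \<open>real m = real n - 1\<close> nr by simp
    qed
    from E1 E2 have "x * K = (1 / real n) * K" by simp
    then have "(x - 1 / real n) * K = 0" by (simp add: algebra_simps)
    then show ?thesis using Knz unfolding x_def by simp
  qed
  show ?thesis
  proof (intro conjI allI impI)
    fix i assume i: "i < n"
    have "d i = \<mu> + c * (t i)\<^sup>2" using ei[OF i] unfolding e_def by simp
    then show "gram m U i i = real m / real n"
      unfolding d_def \<mu>_def xi[OF i] using n by (simp add: field_simps)
  next
    fix i j assume ij: "i < n" "j < n" "i \<noteq> j"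
    have "(Q i j)\<^sup>2 = c\<^sup>2 * ((t i)\<^sup>2 * (t j)\<^sup>2)"
      using Qij[OF ij] by (simp add: power_mult_distrib)
    also have "\<dots> = (c / real n)\<^sup>2"
      using xi ij by (simp add: power_divide power2_eq_square)
    finally have "(Q i j)\<^sup>2 = (c / real n)\<^sup>2" .
    then have "Q i j = c / real n"
      using cpos n by (subst (asm) power2_eq_iff_nonneg) (auto simp: Q_def)
    then show "\<bar>gram m U i j\<bar> = 1 / real n * sqrt ((real n - real m) * real m / (real n - 1))"
      unfolding Q_def c_def by simp
  qed
qed



lemma objective_set_val:
  "objective_set m n = {val m n t U | t U. (\<Sum>i<n. (t i)\<^sup>2) = 1 \<and> orth_rows m n U}"
  unfolding objective_set_def val_def by simp

definition U0 :: "nat \<Rightarrow> nat \<Rightarrow> real" where "U0 i j = (if i = j then 1 else 0)"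

lemma U0_prod: "U0 i j * U0 k j = (if j = i then (if i = k then 1 else 0) else 0)"
  unfolding U0_def by auto

lemma U0_orth: "m \<le> n \<Longrightarrow> orth_rows m n U0"
  unfolding orth_rows_def U0_prod by auto

lemma U0_gram: "i < m \<Longrightarrow> j < m \<Longrightarrow> gram m U0 i j = (if i = j then 1 else 0)"
proof -
  have "U0 k i * U0 k j = (if k = i then (if i = j then 1 else 0) else 0)" for k
    unfolding U0_def by auto
  then show "i < m \<Longrightarrow> j < m \<Longrightarrow> ?thesis" unfolding gram_def by simp
qed

lemma beta_alt:
  assumes "1 < m" "m \<le> n"
  shows "real m / real n * (1 + sqrt ((real n - 1) * (real n - real m) / real m))
       = real m / real n + (real n - 1) / real n * sqrt ((real n - real m) * real m / (real n - 1))"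
proof -
  define c where "c = sqrt ((real n - real m) * real m / (real n - 1))"
  have nr: "real n - real m \<ge> 0" "real n - 1 > 0" "real m > 0" using assms by auto
  have c0: "c \<ge> 0" unfolding c_def using nr by simp
  have c2: "c\<^sup>2 = (real n - real m) * real m / (real n - 1)"
    unfolding c_def using nr by simp
  have s: "sqrt ((real n - 1) * (real n - real m) / real m) = c * (real n - 1) / real m"
  proof (rule real_sqrt_unique)
    show "(c * (real n - 1) / real m)\<^sup>2 = (real n - 1) * (real n - real m) / real m"
      unfolding power_divide power_mult_distrib c2 using nr by (simp add: field_simps power2_eq_square)
    show "0 \<le> c * (real n - 1) / real m" using c0 nr by simp
  qed
  show ?thesis unfolding s c_def[symmetric] using nr by (simp add: field_simps)
qed

theorem proposition3:
  fixes n m :: nat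
  assumes "1 < m" and "m \<le> n"
  shows "Sup (objective_set m n)
           \<le> real m / real n * (1 + sqrt ((real n - 1) * (real n - real m) / real m))
       \<and> (Sup (objective_set m n)
           = real m / real n * (1 + sqrt ((real n - 1) * (real n - real m) / real m))
          \<longleftrightarrow> (\<exists>U. orth_rows m n U
                  \<and> (\<forall>i<n. gram m U i i = real m / real n)
                  \<and> (\<forall>i<n. \<forall>j<n. i \<noteq> j \<longrightarrow>
                       \<bar>gram m U i j\<bar> = 1 / real n * sqrt ((real n - real m) * real m / (real n - 1)))))"
proof -
  define \<beta> where "\<beta> = real m / real n * (1 + sqrt ((real n - 1) * (real n - real m) / real m))"
  define S where "S = objective_set m n"
  have n: "n > 0" using assms by auto
  have S_eq: "S = {val m n t U | t U. (\<Sum>i<n. (t i)\<^sup>2) = 1 \<and> orth_rows m n U}"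
    unfolding S_def objective_set_val ..
  have ub: "x \<le> \<beta>" if "x \<in> S" for x
    using that val_bound[OF assms] unfolding S_eq \<beta>_def by auto
  have ne: "S \<noteq> {}"
  proof -
    have "((\<lambda>i. if i = 0 then 1 else 0::real) i)\<^sup>2 = (if i = 0 then 1 else 0)" for i by simp
    note h = this
    have "(\<Sum>i<n. ((\<lambda>i. if i = 0 then 1 else 0::real) i)\<^sup>2) = 1"
      unfolding h using n by simp
    then have "val m n (\<lambda>i. if i = 0 then 1 else 0) U0 \<in> S"
      unfolding S_eq using U0_orth[OF assms(2)] by blast
    then show ?thesis by auto
  qed
  have bdd: "bdd_above S" using ub by (auto simp: bdd_above_def)
  have le: "Sup S \<le> \<beta>" using ne ub by (rule cSup_least)
  have iff: "Sup S = \<beta> \<longleftrightarrow> (\<exists>U. orth_rows m n U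
                  \<and> (\<forall>i<n. gram m U i i = real m / real n)
                  \<and> (\<forall>i<n. \<forall>j<n. i \<noteq> j \<longrightarrow>
                       \<bar>gram m U i j\<bar> = 1 / real n * sqrt ((real n - real m) * real m / (real n - 1))))"
    (is "_ \<longleftrightarrow> (\<exists>U. ?P U)")
  proof
    assume sup: "Sup S = \<beta>"
    show "\<exists>U. ?P U"
    proof (cases "m = n")
      case True
      show ?thesis
      proof (rule exI[of _ U0], intro conjI allI impI)
        show "orth_rows m n U0" using U0_orth[OF assms(2)] .
        fix i assume "i < n" then show "gram m U0 i i = real m / real n"
          using True n U0_gram[of i m i] by simp
      next
        fix i j assume "i < n" "j < n" "i \<noteq> j"
        then show "\<bar>gram m U0 i j\<bar> = 1 / real n * sqrt ((real n - real m) * real m / (real n - 1))"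
          using True U0_gram[of i m j] by simp
      qed
    next
      case False
      then have mn: "m < n" using assms by auto
      have "\<forall>k::nat. \<exists>p. (\<Sum>i<n. (fst p i)\<^sup>2) = 1 \<and> orth_rows m n (snd p)
              \<and> \<beta> - inverse (real (Suc k)) < val m n (fst p) (snd p)"
      proof
        fix k :: nat
        have "\<beta> - inverse (real (Suc k)) < Sup S" using sup by simp
        then obtain x where "x \<in> S" "\<beta> - inverse (real (Suc k)) < x"
          using less_cSup_iff[OF ne bdd] by auto
        then obtain t U where "x = val m n t U" "(\<Sum>i<n. (t i)\<^sup>2) = 1" "orth_rows m n U"
          unfolding S_eq by blast
        then show "\<exists>p. (\<Sum>i<n. (fst p i)\<^sup>2) = 1 \<and> orth_rows m n (snd p)
              \<and> \<beta> - inverse (real (Suc k)) < val m n (fst p) (snd p)"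
          using \<open>\<beta> - inverse (real (Suc k)) < x\<close> by (intro exI[of _ "(t, U)"]) simp
      qed
      then obtain p where p0: "\<forall>k. (\<Sum>i<n. (fst (p k) i)\<^sup>2) = 1 \<and> orth_rows m n (snd (p k))
              \<and> \<beta> - inverse (real (Suc k)) < val m n (fst (p k)) (snd (p k))"
        by (rule choice[THEN exE])
      note p = spec[OF p0]
      define T where "T = (\<lambda>k. fst (p k))"
      define V where "V = (\<lambda>k. snd (p k))"
      have T1: "(\<Sum>i<n. (T k i)\<^sup>2) = 1" for k using p[of k] unfolding T_def by simp
      have Vo: "orth_rows m n (V k)" for k using p[of k] unfolding V_def by simp
      have vlow: "\<beta> - inverse (real (Suc k)) < val m n (T k) (V k)" for k
        using p[of k] unfolding T_def V_def by simp
      have vup: "val m n (T k) (V k) \<le> \<beta>" for k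
        using val_bound[OF assms Vo T1] unfolding \<beta>_def .
      have Tb: "\<bar>T k i\<bar> \<le> 1" if "i \<in> {..<n}" for k i
      proof -
        have "(T k i)\<^sup>2 \<le> (\<Sum>i<n. (T k i)\<^sup>2)"
          using that by (intro member_le_sum) auto
        then have "(T k i)\<^sup>2 \<le> 1" using T1 by simp
        then show ?thesis by (simp add: abs_square_le_1)
      qed
      have Vb: "\<bar>V k i j\<bar> \<le> 1" if "i < m" "j < n" for k i j
      proof -
        have "(V k i j)\<^sup>2 \<le> (\<Sum>j<n. (V k i j)\<^sup>2)"
          using that by (intro member_le_sum) auto
        also have "\<dots> = 1" using Vo[of k] that unfolding orth_rows_def
          by (simp add: power2_eq_square)
        finally have "(V k i j)\<^sup>2 \<le> 1" by simp
        then show ?thesis by (simp add: abs_square_le_1)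
      qed
      obtain r where r: "strict_mono r" "\<forall>i\<in>{..<n}. convergent (\<lambda>k. T (r k) i)"
        using finite_subseq[of "{..<n}" T 1] Tb by auto
      obtain s where s: "strict_mono s"
        "\<forall>q\<in>{..<m}\<times>{..<n}. convergent (\<lambda>k. (\<lambda>k q. V (r k) (fst q) (snd q)) (s k) q)"
        using finite_subseq[of "{..<m}\<times>{..<n}" "\<lambda>k q. V (r k) (fst q) (snd q)" 1] Vb by auto
      define \<rho> where "\<rho> = r \<circ> s"
      have \<rho>: "strict_mono \<rho>" unfolding \<rho>_def using strict_mono_o[OF r(1) s(1)] .
      define t0 where "t0 = (\<lambda>i. lim (\<lambda>k. T (\<rho> k) i))"
      define W where "W = (\<lambda>i j. lim (\<lambda>k. V (\<rho> k) i j))"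
      have LT: "(\<lambda>k. T (\<rho> k) i) \<longlonglongrightarrow> t0 i" if "i < n" for i
      proof -
        have "convergent (\<lambda>k. T (r k) i)" using r(2) that by auto
        then have "convergent (\<lambda>k. T (\<rho> k) i)"
          using convergent_subseq_convergent[OF _ s(1)] unfolding \<rho>_def by (simp add: o_def)
        then show ?thesis unfolding t0_def by (simp add: convergent_LIMSEQ_iff)
      qed
      have LV: "(\<lambda>k. V (\<rho> k) i j) \<longlonglongrightarrow> W i j" if "i < m" "j < n" for i j
      proof -
        have "convergent (\<lambda>k. V (\<rho> k) i j)"
          using s(2) that unfolding \<rho>_def by (auto simp: o_def)
        then show ?thesis unfolding W_def by (simp add: convergent_LIMSEQ_iff)
      qed
      have t01: "(\<Sum>i<n. (t0 i)\<^sup>2) = 1"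
      proof -
        have "(\<lambda>k. \<Sum>i<n. (T (\<rho> k) i)\<^sup>2) \<longlonglongrightarrow> (\<Sum>i<n. (t0 i)\<^sup>2)"
          by (intro tendsto_sum tendsto_power LT) auto
        moreover have "(\<lambda>k. \<Sum>i<n. (T (\<rho> k) i)\<^sup>2) = (\<lambda>k. 1)" using T1 by simp
        ultimately have "(\<lambda>k. 1) \<longlonglongrightarrow> (\<Sum>i<n. (t0 i)\<^sup>2)" by simp
        then have "1 = (\<Sum>i<n. (t0 i)\<^sup>2)" by (rule LIMSEQ_unique[OF tendsto_const])
        then show ?thesis by simp
      qed
      have Wo: "orth_rows m n W"
        unfolding orth_rows_def
      proof (intro allI impI)
        fix i k assume ik: "i < m" "k < m"
        have "(\<lambda>q. \<Sum>j<n. V (\<rho> q) i j * V (\<rho> q) k j) \<longlonglongrightarrow> (\<Sum>j<n. W i j * W k j)"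
          using ik by (intro tendsto_sum tendsto_mult LV) auto
        moreover have "(\<lambda>q. \<Sum>j<n. V (\<rho> q) i j * V (\<rho> q) k j) = (\<lambda>q. if i = k then 1 else 0)"
          using Vo ik unfolding orth_rows_def by auto
        ultimately have "(\<lambda>q. if i = k then 1 else 0) \<longlonglongrightarrow> (\<Sum>j<n. W i j * W k j)" by simp
        then have "(if i = k then 1 else 0) = (\<Sum>j<n. W i j * W k j)" by (rule LIMSEQ_unique[OF tendsto_const])
        then show "(\<Sum>j<n. W i j * W k j) = (if i = k then 1 else 0)" by simp
      qed
      have Lval: "(\<lambda>q. val m n (T (\<rho> q)) (V (\<rho> q))) \<longlonglongrightarrow> val m n t0 W"
        unfolding val_def gram_def
        by (intro tendsto_sum tendsto_mult tendsto_rabs LT LV) auto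
      have Lb: "(\<lambda>k. val m n (T k) (V k)) \<longlonglongrightarrow> \<beta>"
      proof (rule real_tendsto_sandwich)
        show "\<forall>\<^sub>F k in sequentially. \<beta> - inverse (real (Suc k)) \<le> val m n (T k) (V k)"
          using vlow by (intro always_eventually allI less_imp_le) blast
        show "\<forall>\<^sub>F k in sequentially. val m n (T k) (V k) \<le> \<beta>" using vup by (intro always_eventually allI) blast
        show "(\<lambda>k. \<beta> - inverse (real (Suc k))) \<longlonglongrightarrow> \<beta>"
          using tendsto_diff[OF tendsto_const LIMSEQ_inverse_real_of_nat, of \<beta>] by simp
        show "(\<lambda>k. \<beta>) \<longlonglongrightarrow> \<beta>" by simp
      qed
      have "(\<lambda>q. val m n (T (\<rho> q)) (V (\<rho> q))) \<longlonglongrightarrow> \<beta>"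
        using LIMSEQ_subseq_LIMSEQ[OF Lb \<rho>] by (simp add: o_def)
      then have "val m n t0 W = \<beta>" using LIMSEQ_unique[OF Lval] by simp
      then have "?P W" using equality_case[OF assms(1) mn Wo t01] Wo unfolding \<beta>_def by simp
      then show ?thesis by blast
    qed
  next
    assume "\<exists>U. ?P U"
    then obtain U where U: "?P U" by blast
    define c where "c = sqrt ((real n - real m) * real m / (real n - 1))"
    define t where "t = (\<lambda>i::nat. 1 / sqrt (real n))"
    have t1: "(\<Sum>i<n. (t i)\<^sup>2) = 1" unfolding t_def using n by (simp add: power_divide)
    have row: "(\<Sum>j<n. \<bar>gram m U i j\<bar>) = real m / real n + (real n - 1) * (c / real n)"
      if i: "i < n" for i
    proof -
      have "(\<Sum>j<n. \<bar>gram m U i j\<bar>) = (\<Sum>j<n. c / real n + (if j = i then real m / real n - c / real n else 0))"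
        using U i gram_diag_nonneg[of m U i] unfolding c_def by (intro sum.cong) auto
      also have "\<dots> = real n * (c / real n) + (real m / real n - c / real n)"
        using i by (simp add: sum.distrib)
      finally show ?thesis using n by (simp add: field_simps)
    qed
    have "val m n t U = (\<Sum>i<n. (1 / real n) * (\<Sum>j<n. \<bar>gram m U i j\<bar>))"
      unfolding val_def t_def using n
      by (simp add: sum_distrib_left power2_eq_square[symmetric] mult.assoc[symmetric] power_divide)
    also have "\<dots> = real m / real n + (real n - 1) * (c / real n)"
      using row n by simp
    also have "\<dots> = \<beta>"
      unfolding \<beta>_def beta_alt[OF assms] c_def by simp
    finally have "\<beta> \<in> S" unfolding S_eq using t1 U by blast
    then have "\<beta> \<le> Sup S" using bdd by (rule cSup_upper)
    then show "Sup S = \<beta>" using le by simp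
  qed
  show ?thesis using le iff unfolding S_def \<beta>_def by blast
qed

end
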